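(* Let $G=(V,E)$ be an undirected graph with $n$ vertices and non-negative edge weights of maximum value $W$, let $K$ be a positive integer, and let $\varepsilon>0$. Let $s,t \in V$ be vertices with finite distance $d(s,t)$, set $r = \frac{\varepsilon}{2} d(s,t) + W$, and let $P$ be a shortest $s$-$t$ path in $G$. (i) If all vertices of $P$ lie in $V_r$, then the hop-distance from $s$ to $t$ in $H$ is at most $\lceil 2/\varepsilon\rceil$. (ii) If all vertices of $P$ lie in $V_r$, then $V(P)\cap A_{1/\varepsilon}(s)\cap A_{1/\varepsilon}(t) \neq \emptyset$. (iii) If $P$ contains a vertex of $V\setminus V_r$, then $(V(P)\setminus V_r)\cap A_{1/\varepsilon}(s)$ or $(V(P)\setminus V_r)\cap A_{1/\varepsilon}(t)$ is non-empty.
   Context: $d(u,v)$ is the weighted distance in $G$. For $v\in V$, $K[v]$ is a set of the $K$ vertices closest to $v$ in $G$ (including $v$, ties broken arbitrarily; the whole connected component of $v$ if it has fewer than $K$ vertices). $\mathrm{ball}(v,r)=\{u\in V: d(v,u)\le r\}$ and $V_r=\{v\in V:\mathrm{ball}(v,r)\subseteq K[v]\}$. $H$ is the auxiliary graph on vertex set $V$ with, for each $v\in V$, an edge (hop) from $v$ to every $v'\in K[v]\setminus\{v\}$, of weight $d(v,v')$; a hop may be taken from $v$ to $v'$ only when $v'\in K[v]$. The hop-distance from $x$ to $y$ in $H$ is the minimum number of hops on a walk in $H$ from $x$ to $y$. For a vertex $x$, $A_{1/\varepsilon}(x)$ is the set of vertices reachable from $x$ in $H$ by at most $\lceil 1/\varepsilon\rceil$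 hops. *)

theory Defs
  imports Main "HOL-Library.Extended_Real"
begin

definition wgraph :: "'a set \<Rightarrow> 'a set set \<Rightarrow> ('a set \<Rightarrow> real) \<Rightarrow> bool" where
  "wgraph V E w \<longleftrightarrow> finite V \<and>
     (\<forall>e\<in>E. \<exists>u v. u \<noteq> v \<and> u \<in> V \<and> v \<in> V \<and> e = {u, v}) \<and>
     (\<forall>e\<in>E. w e \<ge> 0)"

definition max_weight :: "'a set set \<Rightarrow> ('a set \<Rightarrow> real) \<Rightarrow> real" where
  "max_weight E w = Max (insert 0 (w ` E))"

definition is_walk :: "'a set \<Rightarrow> 'a set set \<Rightarrow> 'a list \<Rightarrow> bool" where
  "is_walk V E p \<longleftrightarrow> p \<noteq> [] \<and> set p \<subseteq> V \<and> successively (\<lambda>a b. {a, b} \<in> E) p"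

definition walk_weight :: "('a set \<Rightarrow> real) \<Rightarrow> 'a list \<Rightarrow> real" where
  "walk_weight w p = sum_list (map (\<lambda>(a, b). w {a, b}) (zip p (tl p)))"

definition gdist :: "'a set \<Rightarrow> 'a set set \<Rightarrow> ('a set \<Rightarrow> real) \<Rightarrow> 'a \<Rightarrow> 'a \<Rightarrow> ereal" where
  "gdist V E w u v = Inf {ereal (walk_weight w p) | p. is_walk V E p \<and> hd p = u \<and> last p = v}"

definition is_shortest_path :: "'a set \<Rightarrow> 'a set set \<Rightarrow> ('a set \<Rightarrow> real) \<Rightarrow> 'a \<Rightarrow> 'a \<Rightarrow> 'a list \<Rightarrow> bool" where
  "is_shortest_path V E w u v p \<longleftrightarrow> is_walk V E p \<and> distinct p \<and> hd p = u \<and> last p = v \<and>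
     ereal (walk_weight w p) = gdist V E w u v"

definition comp :: "'a set \<Rightarrow> 'a set set \<Rightarrow> ('a set \<Rightarrow> real) \<Rightarrow> 'a \<Rightarrow> 'a set" where
  "comp V E w v = {u \<in> V. gdist V E w v u < \<infinity>}"

text \<open>Kset is a valid choice of K[v] for every v: a set of the K vertices closest to v
  (including v, ties arbitrary), or the whole component if it has fewer than K vertices.\<close>
definition valid_Ksets :: "'a set \<Rightarrow> 'a set set \<Rightarrow> ('a set \<Rightarrow> real) \<Rightarrow> nat \<Rightarrow> ('a \<Rightarrow> 'a set) \<Rightarrow> bool" where
  "valid_Ksets V E w K Kset \<longleftrightarrow> (\<forall>v\<in>V.
     v \<in> Kset v \<and> Kset v \<subseteq> comp V E w v \<and>
     card (Kset v) = min K (card (comp V E w v)) \<and>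
     (\<forall>u\<in>Kset v. \<forall>x\<in>comp V E w v - Kset v. gdist V E w v u \<le> gdist V E w v x))"

definition ball :: "'a set \<Rightarrow> 'a set set \<Rightarrow> ('a set \<Rightarrow> real) \<Rightarrow> 'a \<Rightarrow> real \<Rightarrow> 'a set" where
  "ball V E w v r = {u \<in> V. gdist V E w v u \<le> ereal r}"

definition Vr :: "'a set \<Rightarrow> 'a set set \<Rightarrow> ('a set \<Rightarrow> real) \<Rightarrow> ('a \<Rightarrow> 'a set) \<Rightarrow> real \<Rightarrow> 'a set" where
  "Vr V E w Kset r = {v \<in> V. ball V E w v r \<subseteq> Kset v}"

text \<open>Hop relation of the auxiliary graph H: a hop from v to v' \<in> K[v] - {v}.\<close>
definition hop :: "'a set \<Rightarrow> ('a \<Rightarrow> 'a set) \<Rightarrow> ('a \<times> 'a) set" where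
  "hop V Kset = {(v, v'). v \<in> V \<and> v' \<in> Kset v \<and> v' \<noteq> v}"

definition hop_dist :: "'a set \<Rightarrow> ('a \<Rightarrow> 'a set) \<Rightarrow> 'a \<Rightarrow> 'a \<Rightarrow> enat" where
  "hop_dist V Kset x y = Inf {enat k | k. (x, y) \<in> (hop V Kset) ^^ k}"

definition A_set :: "'a set \<Rightarrow> ('a \<Rightarrow> 'a set) \<Rightarrow> real \<Rightarrow> 'a \<Rightarrow> 'a set" where
  "A_set V Kset eps x = {y. \<exists>k \<le> nat \<lceil>1 / eps\<rceil>. (x, y) \<in> (hop V Kset) ^^ k}"

end

theory Submission
  imports Defs
begin


lemma ww_sum: "walk_weight w q = (\<Sum>l<length q - 1. w {q!l, q!Suc l})"
proof (induction q rule: induct_list012)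
  case 1 then show ?case by (simp add: walk_weight_def)
next
  case (2 x) then show ?case by (simp add: walk_weight_def)
next
  case (3 x y zs)
  have "walk_weight w (x # y # zs) = w {x,y} + walk_weight w (y # zs)"
    by (simp add: walk_weight_def)
  also have "\<dots> = (\<Sum>l<length (x#y#zs) - 1. w {(x#y#zs)!l, (x#y#zs)!Suc l})"
    using 3(2) by (simp add: sum.lessThan_Suc_shift del: sum.lessThan_Suc)
  finally show ?case .
qed

lemma ww_snoc: "xs \<noteq> [] \<Longrightarrow> walk_weight w (xs @ [a]) = walk_weight w xs + w {last xs, a}"
proof (induction xs rule: induct_list012)
  case (3 x y zs)
  then show ?case by (simp add: walk_weight_def)
qed (auto simp: walk_weight_def)

lemma ww_rev: "walk_weight w (rev q) = walk_weight w q"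
proof (induction q)
  case Nil then show ?case by (simp add: walk_weight_def)
next
  case (Cons a q)
  show ?case
  proof (cases q)
    case Nil then show ?thesis by (simp add: walk_weight_def)
  next
    case (Cons b q')
    have "rev q \<noteq> []" using Cons by simp
    then have "walk_weight w (rev q @ [a]) = walk_weight w (rev q) + w {last (rev q), a}"
      by (rule ww_snoc)
    then have "walk_weight w (rev (a # q)) = walk_weight w (rev q) + w {last (rev q), a}"
      by simp
    also have "\<dots> = w {a, b} + walk_weight w q" using Cons Cons.IH
      by (simp add: insert_commute)
    also have "\<dots> = walk_weight w (a # q)" using Cons by (simp add: walk_weight_def)
    finally show ?thesis .
  qed
qed

lemma gdist_le: "is_walk V E q \<Longrightarrow> hd q = u \<Longrightarrow> last q = v \<Longrightarrow> gdist V E w u v \<le> ereal (walk_weight w q)"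
  unfolding gdist_def by (rule Inf_lower) blast

lemma walk_rev: "is_walk V E q \<Longrightarrow> is_walk V E (rev q)"
  unfolding is_walk_def by (simp add: insert_commute)

lemma walk_sub: assumes "is_walk V E P" "i \<le> j" "j < length P"
  shows "is_walk V E (drop i (take (Suc j) P))"
  using assms unfolding is_walk_def successively_conv_nth
  apply (auto dest: in_set_dropD in_set_takeD)
  done

lemma sub_props: assumes "i \<le> j" "j < length P"
  shows "hd (drop i (take (Suc j) P)) = P!i" "last (drop i (take (Suc j) P)) = P!j"
    "walk_weight w (drop i (take (Suc j) P)) = (\<Sum>l<j. w {P!l, P!Suc l}) - (\<Sum>l<i. w {P!l, P!Suc l})"
proof -
  show "hd (drop i (take (Suc j) P)) = P!i" using assms by (simp add: hd_drop_conv_nth)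
  show "last (drop i (take (Suc j) P)) = P!j" using assms by (simp add: last_drop last_conv_nth)
  have "walk_weight w (drop i (take (Suc j) P)) = (\<Sum>l<j-i. w {P!(i+l), P!Suc (i+l)})"
  proof -
    have "length P \<le> Suc j \<Longrightarrow> length P - Suc i = j - i" using assms by arith
    then show ?thesis using assms by (simp add: ww_sum min_def)
  qed
  also have "\<dots> = (\<Sum>l=i..<j. w {P!l, P!Suc l})"
  proof -
    have "(\<Sum>l=0+i..<(j-i)+i. w {P!l, P!Suc l}) = (\<Sum>l=0..<j-i. w {P!(l+i), P!Suc (l+i)})"
      by (rule sum.shift_bounds_nat_ivl)
    then show ?thesis using assms by (simp add: lessThan_atLeast0 add.commute)
  qed
  also have "\<dots> = (\<Sum>l<j. w {P!l, P!Suc l}) - (\<Sum>l<i. w {P!l, P!Suc l})"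
    using assms by (simp add: sum_diff_nat_ivl lessThan_atLeast0)
  finally show "walk_weight w (drop i (take (Suc j) P)) = (\<Sum>l<j. w {P!l, P!Suc l}) - (\<Sum>l<i. w {P!l, P!Suc l})" .
qed



lemma core_step:
  fixes Q :: "'a list" and p :: "nat \<Rightarrow> real"
  assumes n: "g \<le> n" and c: "c \<ge> 0"
    and mono: "\<And>i j. i \<le> j \<Longrightarrow> j \<le> n \<Longrightarrow> p i \<le> p j"
    and stp: "\<And>j. j < n \<Longrightarrow> p (Suc j) - p j \<le> W"
    and hopc: "\<And>i j. i < g \<Longrightarrow> i < j \<Longrightarrow> j \<le> n \<Longrightarrow> p j - p i \<le> c + W \<Longrightarrow> (Q!i, Q!j) \<in> R"
    and i: "i < g"
  shows "\<exists>i'. i < i' \<and> i' \<le> g \<and> (\<forall>j. i < j \<longrightarrow> j \<le> i' \<longrightarrow> (Q!i, Q!j) \<in> R) \<and> (i' = g \<or> p i' - p i > c)"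
proof -
  define S where "S = {j. i < j \<and> j \<le> g \<and> p j - p i \<le> c + W}"
  have fS: "finite S" unfolding S_def by auto
  have "Suc i \<in> S" unfolding S_def using i n stp[of i] c by auto
  then have ne: "S \<noteq> {}" by auto
  define i' where "i' = Max S"
  have i'S: "i' \<in> S" unfolding i'_def using fS ne by (rule Max_in)
  have mx: "\<And>j. j \<in> S \<Longrightarrow> j \<le> i'" unfolding i'_def using fS by (rule Max_ge)
  have A: "\<forall>j. i < j \<longrightarrow> j \<le> i' \<longrightarrow> (Q!i, Q!j) \<in> R"
  proof (intro allI impI)
    fix j assume "i < j" "j \<le> i'"
    moreover have "p j \<le> p i'" using mono[of j i'] \<open>j \<le> i'\<close> i'S n unfolding S_def by auto
    ultimately show "(Q!i, Q!j) \<in> R" using hopc[of i j] i i'S n unfolding S_def by auto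
  qed
  have B0: "p i' - p i > c" if "i' \<noteq> g"
  proof -
    have "Suc i' \<le> g" using that i'S unfolding S_def by auto
    moreover have "Suc i' \<notin> S" using mx[of "Suc i'"] by linarith
    ultimately have "p (Suc i') - p i > c + W" using i'S unfolding S_def by auto
    moreover have "p (Suc i') - p i' \<le> W" using stp[of i'] \<open>Suc i' \<le> g\<close> n by auto
    ultimately show "p i' - p i > c" by linarith
  qed
  have B: "i' = g \<or> p i' - p i > c" using B0 by blast
  show ?thesis using A B i'S unfolding S_def by blast
qed

lemma core:
  fixes Q :: "'a list" and p :: "nat \<Rightarrow> real"
  assumes n: "g \<le> n" and c: "c \<ge> 0"
    and mono: "\<And>i j. i \<le> j \<Longrightarrow> j \<le> n \<Longrightarrow> p i \<le> p j"
    and stp: "\<And>j. j < n \<Longrightarrow> p (Suc j) - p j \<le> W"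
    and hopc: "\<And>i j. i < g \<Longrightarrow> i < j \<Longrightarrow> j \<le> n \<Longrightarrow> p j - p i \<le> c + W \<Longrightarrow> (Q!i, Q!j) \<in> R"
  shows "\<exists>i \<le> g. (\<forall>j \<le> i. \<exists>k \<le> m. (Q!0, Q!j) \<in> R^^k) \<and> (i = g \<or> p i - p 0 > real m * c \<or> m = 0)"
proof (induction m)
  case 0
  show ?case by (rule exI[of _ 0]) auto
next
  case (Suc m)
  then obtain i where i: "i \<le> g" and reach: "\<forall>j \<le> i. \<exists>k \<le> m. (Q!0, Q!j) \<in> R^^k"
    and d: "i = g \<or> p i - p 0 > real m * c \<or> m = 0" by blast
  show ?case
  proof (cases "i = g")
    case True
    have "\<forall>j \<le> i. \<exists>k \<le> Suc m. (Q!0, Q!j) \<in> R^^k" 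
    proof (intro allI impI)
      fix j assume "j \<le> i"
      then obtain k where "k \<le> m" "(Q!0, Q!j) \<in> R^^k" using reach by blast
      then show "\<exists>k \<le> Suc m. (Q!0, Q!j) \<in> R^^k" by (intro exI[of _ k]) auto
    qed
    then show ?thesis using i True by blast
  next
    case False
    then have ig: "i < g" using i by auto
    obtain i' where i': "i < i'" "i' \<le> g" and hh: "\<forall>j. i < j \<longrightarrow> j \<le> i' \<longrightarrow> (Q!i, Q!j) \<in> R"
      and dd: "i' = g \<or> p i' - p i > c"
      using core_step[where p=p and W=W and Q=Q and R=R and i=i, OF n c mono stp hopc ig] by blast
    have "p i - p 0 \<ge> real m * c"
    proof -
      have "p 0 \<le> p i" using mono[of 0 i] i n by simp
      then show ?thesis using d False by (cases "m = 0") auto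
    qed
    moreover have "p i \<le> p i'" using mono[of i i'] i' n by simp
    moreover have "real (Suc m) * c = real m * c + c" by (simp add: distrib_right)
    ultimately have dd': "i' = g \<or> p i' - p 0 > real (Suc m) * c" using dd
      by linarith
    have "\<forall>j \<le> i'. \<exists>k \<le> Suc m. (Q!0, Q!j) \<in> R^^k"
    proof (intro allI impI)
      fix j assume "j \<le> i'"
      show "\<exists>k \<le> Suc m. (Q!0, Q!j) \<in> R^^k"
      proof (cases "j \<le> i")
        case True
        then obtain k where "k \<le> m" "(Q!0, Q!j) \<in> R^^k" using reach by blast
        then show ?thesis by (intro exI[of _ k]) auto
      next
        case False
        obtain k where "k \<le> m" "(Q!0, Q!i) \<in> R^^k" using reach by blast
        moreover have "(Q!i, Q!j) \<in> R" using hh False \<open>j \<le> i'\<close> by auto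
        ultimately have "(Q!0, Q!j) \<in> R^^Suc k" by auto
        then show ?thesis using \<open>k \<le> m\<close> by (intro exI[of _ "Suc k"]) auto
      qed
    qed
    then show ?thesis using i' dd' by blast
  qed
qed



theorem lemma8:
  fixes V :: "'a set" and E :: "'a set set" and w :: "'a set \<Rightarrow> real"
    and K :: nat and eps :: real and s t :: "'a" and P :: "'a list"
    and Kset :: "'a \<Rightarrow> 'a set"
  assumes G: "wgraph V E w"
    and K: "K > 0"
    and Ks: "valid_Ksets V E w K Kset"
    and eps: "eps > 0"
    and st: "s \<in> V" "t \<in> V"
    and fin: "gdist V E w s t < \<infinity>"
    and P: "is_shortest_path V E w s t P"
  defines "r \<equiv> eps / 2 * real_of_ereal (gdist V E w s t) + max_weight E w"
  shows "(set P \<subseteq> Vr V E w Kset r \<longrightarrow> hop_dist V Kset s t \<le> enat (nat \<lceil>2 / eps\<rceil>))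
       \<and> (set P \<subseteq> Vr V E w Kset r \<longrightarrow>
            set P \<inter> A_set V Kset eps s \<inter> A_set V Kset eps t \<noteq> {})
       \<and> (set P - Vr V E w Kset r \<noteq> {} \<longrightarrow>
            (set P - Vr V E w Kset r) \<inter> A_set V Kset eps s \<noteq> {} \<or>
            (set P - Vr V E w Kset r) \<inter> A_set V Kset eps t \<noteq> {})"
proof -
  have walk: "is_walk V E P" and dist: "distinct P" and hdP: "hd P = s" and lastP: "last P = t"
    and wP: "ereal (walk_weight w P) = gdist V E w s t"
    using P unfolding is_shortest_path_def by auto
  have Pne: "P \<noteq> []" using walk unfolding is_walk_def by auto
  have PV: "set P \<subseteq> V" using walk unfolding is_walk_def by auto
  define n where "n = length P - 1"
  have lenP: "length P = Suc n" using Pne unfolding n_def by (cases P) auto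
  define f where "f = (\<lambda>l. w {P!l, P!Suc l})"
  define pos where "pos = (\<lambda>k. \<Sum>l<k. f l)"
  define W where "W = max_weight E w"
  define R where "R = hop V Kset"
  define D where "D = walk_weight w P"
  define c where "c = eps / 2 * D"
  have finE: "finite E"
  proof -
    have "E \<subseteq> Pow V"
    proof
      fix e assume "e \<in> E"
      then obtain u v where "u \<in> V" "v \<in> V" "e = {u, v}" using G unfolding wgraph_def by meson
      then show "e \<in> Pow V" by simp
    qed
    moreover have "finite V" using G unfolding wgraph_def by simp
    ultimately show ?thesis using finite_subset by blast
  qed
  have edge: "{P!l, P!Suc l} \<in> E" if "l < n" for l
    using walk that lenP unfolding is_walk_def by (auto intro: successively_nth)
  have f0: "f l \<ge> 0" if "l < n" for l
    using edge[OF that] G unfolding wgraph_def f_def by simp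
  have fW: "f l \<le> W" if "l < n" for l
  proof -
    have "f l \<in> insert 0 (w ` E)" using edge[OF that] unfolding f_def by blast
    then show ?thesis unfolding W_def max_weight_def using finE by (intro Max_ge) auto
  qed
  have posS: "pos (Suc j) = pos j + f j" for j unfolding pos_def by simp
  have mono: "pos i \<le> pos j" if "i \<le> j" "j \<le> n" for i j
    using that
  proof (induction j rule: dec_induct)
    case base then show ?case by simp
  next
    case (step m) then show ?case using posS[of m] f0[of m] by simp
  qed
  have stp: "pos (Suc j) - pos j \<le> W" if "j < n" for j using posS[of j] fW[OF that] by simp
  have Dpos: "D = pos n" unfolding D_def pos_def f_def using lenP by (simp add: ww_sum)
  have pos0: "pos 0 = 0" unfolding pos_def by simp
  have D0: "D \<ge> 0" using Dpos mono[of 0 n] pos0 by simp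
  have c0: "c \<ge> 0" unfolding c_def using D0 eps by simp
  have rdef: "r = c + W" unfolding r_def c_def W_def D_def using wP[symmetric] by simp
  have sub: "pos j - pos i = walk_weight w (drop i (take (Suc j) P))"
    "is_walk V E (drop i (take (Suc j) P))"
    "hd (drop i (take (Suc j) P)) = P!i" "last (drop i (take (Suc j) P)) = P!j"
    if "i \<le> j" "j \<le> n" for i j
    using sub_props[where i=i and j=j and P=P] walk_sub[OF walk, of i j] that lenP
    unfolding pos_def f_def by auto
  have nV: "P!j \<in> V" if "j \<le> n" for j using PV that lenP by auto
  have neq: "P!i \<noteq> P!j" if "i < j" "j \<le> n" for i j
    using dist that lenP by (simp add: nth_eq_iff_index_eq)
  have H1: "(P!i, P!j) \<in> R" if "i < j" "j \<le> n" "P!i \<in> Vr V E w Kset r" "pos j - pos i \<le> c + W" for i j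
  proof -
    have "gdist V E w (P!i) (P!j) \<le> ereal (pos j - pos i)"
      using gdist_le[OF sub(2)[of i j]] sub[of i j] that by simp
    also have "\<dots> \<le> ereal r" using that rdef by simp
    finally have "P!j \<in> ball V E w (P!i) r" unfolding ball_def using nV that by simp
    then have "P!j \<in> Kset (P!i)" using that(3) unfolding Vr_def by blast
    then show ?thesis unfolding R_def hop_def using that neq[of i j] nV[of i] by auto
  qed
  have H2: "(P!j, P!i) \<in> R" if "i < j" "j \<le> n" "P!j \<in> Vr V E w Kset r" "pos j - pos i \<le> c + W" for i j
  proof -
    let ?q = "rev (drop i (take (Suc j) P))"
    have "is_walk V E ?q" using walk_rev sub(2)[of i j] that by simp
    moreover have "hd ?q = P!j" "last ?q = P!i"
      using sub(3,4)[of i j] that sub(2)[of i j] unfolding is_walk_def by (auto simp: hd_rev last_rev)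
    ultimately have "gdist V E w (P!j) (P!i) \<le> ereal (walk_weight w ?q)" by (rule gdist_le)
    also have "\<dots> = ereal (pos j - pos i)" using sub(1)[of i j] that by (simp add: ww_rev)
    also have "\<dots> \<le> ereal r" using that rdef by simp
    finally have "P!i \<in> ball V E w (P!j) r" unfolding ball_def using nV that by simp
    then have "P!i \<in> Kset (P!j)" using that(3) unfolding Vr_def by blast
    then show ?thesis unfolding R_def hop_def using that neq[of i j] nV[of j] by auto
  qed
  define p' where "p' = (\<lambda>j. - pos (n - j))"
  have revn: "rev P ! j = P ! (n - j)" if "j \<le> n" for j using that lenP by (simp add: rev_nth)
  have mono': "p' i \<le> p' j" if "i \<le> j" "j \<le> n" for i j
    unfolding p'_def using mono[of "n-j" "n-i"] that by simp
  have stp': "p' (Suc j) - p' j \<le> W" if "j < n" for j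
  proof -
    have "n - j = Suc (n - Suc j)" using that by simp
    then show ?thesis unfolding p'_def using stp[of "n - Suc j"] that by simp
  qed
  have fwd: "\<exists>i \<le> g. (\<forall>j \<le> i. \<exists>k \<le> m. (s, P!j) \<in> R^^k) \<and> (i = g \<or> pos i > real m * c \<or> m = 0)"
    if "g \<le> n" "\<And>i. i < g \<Longrightarrow> P!i \<in> Vr V E w Kset r" for g m
  proof -
    have "s = P!0" using hdP Pne by (simp add: hd_conv_nth)
    moreover have "\<exists>i \<le> g. (\<forall>j \<le> i. \<exists>k \<le> m. (P!0, P!j) \<in> R^^k) \<and> (i = g \<or> pos i - pos 0 > real m * c \<or> m = 0)"
      by (rule core[where p=pos and W=W and Q=P and R=R and m=m, OF that(1) c0 mono stp]) (auto intro: H1 that(2))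
    ultimately show ?thesis using pos0 by simp
  qed
  have bwd: "\<exists>i \<le> g. (\<forall>j \<le> i. \<exists>k \<le> m. (t, P!(n-j)) \<in> R^^k) \<and> (i = g \<or> pos (n - i) < D - real m * c \<or> m = 0)"
    if "g \<le> n" "\<And>i. i < g \<Longrightarrow> P!(n-i) \<in> Vr V E w Kset r" for g m
  proof -
    have tt: "t = rev P!0" using lastP Pne by (simp add: last_conv_nth rev_nth)
    have "\<exists>i \<le> g. (\<forall>j \<le> i. \<exists>k \<le> m. (rev P!0, rev P!j) \<in> R^^k) \<and> (i = g \<or> p' i - p' 0 > real m * c \<or> m = 0)"
    proof (rule core[where p=p' and W=W and Q="rev P" and R=R and m=m, OF that(1) c0 mono' stp'])
      fix i j assume a: "i < g" "i < j" "j \<le> n" "p' j - p' i \<le> c + W"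
      have "(P!(n-i), P!(n-j)) \<in> R"
        using a that by (intro H2) (auto simp: p'_def)
      then show "(rev P ! i, rev P ! j) \<in> R" using revn a that by simp
    qed
    then obtain i where "i \<le> g" "\<forall>j \<le> i. \<exists>k \<le> m. (rev P!0, rev P!j) \<in> R^^k"
      "i = g \<or> p' i - p' 0 > real m * c \<or> m = 0" by blast
    moreover have "\<forall>j \<le> i. rev P ! j = P!(n-j)" using revn \<open>i \<le> g\<close> that(1) by auto
    ultimately show ?thesis using tt Dpos unfolding p'_def by (intro exI[of _ i]) auto
  qed
  define kk where "kk = nat \<lceil>1 / eps\<rceil>"
  have kk1: "real kk * eps \<ge> 1"
  proof -
    have "1 / eps \<le> real kk" unfolding kk_def by (rule real_nat_ceiling_ge)
    then have "1 / eps * eps \<le> real kk * eps" using eps by (intro mult_right_mono) auto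
    then show ?thesis using eps by simp
  qed
  have kkc: "real kk * c \<ge> D / 2"
  proof -
    have "1 * D \<le> (real kk * eps) * D" using kk1 D0 by (intro mult_right_mono) auto
    moreover have "real kk * c = (real kk * eps) * D / 2" unfolding c_def by simp
    ultimately show ?thesis by linarith
  qed
  have kk0: "kk \<noteq> 0" using kk1 by (cases kk) auto
  have A_eq: "A_set V Kset eps x = {y. \<exists>k \<le> kk. (x, y) \<in> R^^k}" for x
    unfolding A_set_def kk_def R_def by simp
  have inP: "P!j \<in> set P" if "j \<le> n" for j using that lenP by simp
  have Pn: "P!n = t" using lastP Pne lenP by (simp add: last_conv_nth)
  have part1: "hop_dist V Kset s t \<le> enat (nat \<lceil>2 / eps\<rceil>)" if all: "set P \<subseteq> Vr V E w Kset r"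
  proof -
    define m2 where "m2 = nat \<lceil>2 / eps\<rceil>"
    have m21: "real m2 * eps \<ge> 2"
    proof -
      have "2 / eps \<le> real m2" unfolding m2_def by (rule real_nat_ceiling_ge)
      then have "2 / eps * eps \<le> real m2 * eps" using eps by (intro mult_right_mono) auto
      then show ?thesis using eps by simp
    qed
    have m2c: "real m2 * c \<ge> D"
    proof -
      have "2 * D \<le> (real m2 * eps) * D" using m21 D0 by (intro mult_right_mono) auto
      moreover have "real m2 * c = (real m2 * eps) * D / 2" unfolding c_def by simp
      ultimately show ?thesis by linarith
    qed
    have m20: "m2 \<noteq> 0" using m21 by (cases m2) auto
    obtain i where i: "i \<le> n" "\<forall>j \<le> i. \<exists>k \<le> m2. (s, P!j) \<in> R^^k" "i = n \<or> pos i > real m2 * c \<or> m2 = 0"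
    proof -
      have "\<And>i. i < n \<Longrightarrow> P!i \<in> Vr V E w Kset r" using all inP by (meson less_imp_le subsetD)
      from fwd[of n m2, OF order_refl this] show ?thesis using that by blast
    qed
    have "pos i \<le> D" using mono[of i n] i Dpos by simp
    then have "i = n" using i(3) m2c m20 by linarith
    then obtain k where k: "k \<le> m2" "(s, t) \<in> R^^k" using i(2) Pn by blast
    have "hop_dist V Kset s t \<le> enat k"
      unfolding hop_dist_def using k(2) unfolding R_def by (intro Inf_lower) blast
    also have "\<dots> \<le> enat m2" using k(1) by simp
    finally show ?thesis unfolding m2_def .
  qed
  have part2: "set P \<inter> A_set V Kset eps s \<inter> A_set V Kset eps t \<noteq> {}" if all: "set P \<subseteq> Vr V E w Kset r"
  proof -
    obtain ia where ia: "ia \<le> n" "\<forall>j \<le> ia. \<exists>k \<le> kk. (s, P!j) \<in> R^^k" "ia = n \<or> pos ia > real kk * c \<or> kk = 0"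
    proof -
      have "\<And>i. i < n \<Longrightarrow> P!i \<in> Vr V E w Kset r" using all inP by (meson less_imp_le subsetD)
      from fwd[of n kk, OF order_refl this] show ?thesis using that by blast
    qed
    obtain ib where ib: "ib \<le> n" "\<forall>j \<le> ib. \<exists>k \<le> kk. (t, P!(n-j)) \<in> R^^k" "ib = n \<or> pos (n - ib) < D - real kk * c \<or> kk = 0"
    proof -
      have "\<And>i. i < n \<Longrightarrow> P!(n-i) \<in> Vr V E w Kset r" using all inP by (meson diff_le_self subsetD)
      from bwd[of n kk, OF order_refl this] show ?thesis using that by blast
    qed
    have le: "n - ib \<le> ia"
    proof (rule ccontr)
      assume "\<not> n - ib \<le> ia"
      then have "pos ia \<le> pos (n - ib)" using mono[of "ia" "n - ib"] by simp
      moreover have "ia \<noteq> n" "ib \<noteq> n" using \<open>\<not> n - ib \<le> ia\<close> by auto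
      ultimately show False using ia(3) ib(3) kk0 kkc by linarith
    qed
    have "P!ia \<in> A_set V Kset eps s" unfolding A_eq using ia(2) by blast
    moreover have "P!ia \<in> A_set V Kset eps t"
    proof -
      have "n - ia \<le> ib" using le ia(1) ib(1) by linarith
      then obtain k where k: "k \<le> kk" "(t, P!(n - (n - ia))) \<in> R^^k" using ib(2) by blast
      moreover have "P!(n - (n - ia)) = P!ia" using ia(1) by simp
      ultimately show ?thesis unfolding A_eq by auto
    qed
    ultimately show ?thesis using inP[OF ia(1)] by blast
  qed
  have part3: "(set P - Vr V E w Kset r) \<inter> A_set V Kset eps s \<noteq> {} \<or>
            (set P - Vr V E w Kset r) \<inter> A_set V Kset eps t \<noteq> {}" if bad: "set P - Vr V E w Kset r \<noteq> {}"
  proof -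
    obtain x where x: "x \<in> set P" "x \<notin> Vr V E w Kset r" using bad by blast
    obtain ix0 where ix0: "ix0 < length P" "P!ix0 = x" using x(1) by (auto simp: in_set_conv_nth)
    obtain ix where ix: "ix \<le> n" "P!ix = x" using ix0 lenP by (intro that[of ix0]) auto
    define gs where "gs = (LEAST i. P!i \<notin> Vr V E w Kset r)"
    define gt where "gt = (LEAST i. P!(n-i) \<notin> Vr V E w Kset r)"
    let ?Ps = "\<lambda>i. P!i \<notin> Vr V E w Kset r"
    let ?Pt = "\<lambda>i. P!(n-i) \<notin> Vr V E w Kset r"
    have pix: "?Ps ix" using ix x by simp
    have gs1: "P!gs \<notin> Vr V E w Kset r" unfolding gs_def using LeastI[of ?Ps ix, OF pix] .
    have gs2: "gs \<le> ix" unfolding gs_def using Least_le[of ?Ps ix, OF pix] .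
    have gs3: "P!i \<in> Vr V E w Kset r" if "i < gs" for i
      using not_less_Least[of i ?Ps] that unfolding gs_def by blast
    have pt: "?Pt (n - ix)" using ix x by simp
    have gt1: "P!(n-gt) \<notin> Vr V E w Kset r" unfolding gt_def using LeastI[of ?Pt "n - ix", OF pt] .
    have gt2: "gt \<le> n - ix" unfolding gt_def using Least_le[of ?Pt "n - ix", OF pt] .
    have gt3: "P!(n-i) \<in> Vr V E w Kset r" if "i < gt" for i
      using not_less_Least[of i ?Pt] that unfolding gt_def by blast
    have gsgt: "gs \<le> n - gt" unfolding gs_def using Least_le[of ?Ps "n - gt", OF gt1] .
    obtain ia where ia: "ia \<le> gs" "\<forall>j \<le> ia. \<exists>k \<le> kk. (s, P!j) \<in> R^^k" "ia = gs \<or> pos ia > real kk * c \<or> kk = 0"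
    proof -
      have "gs \<le> n" using gs2 ix by simp
      from fwd[of gs kk, OF this gs3] show ?thesis using that by blast
    qed
    obtain ib where ib: "ib \<le> gt" "\<forall>j \<le> ib. \<exists>k \<le> kk. (t, P!(n-j)) \<in> R^^k" "ib = gt \<or> pos (n - ib) < D - real kk * c \<or> kk = 0"
    proof -
      have "gt \<le> n" using gt2 ix by simp
      from bwd[of gt kk, OF this gt3] show ?thesis using that by blast
    qed
    show ?thesis
    proof (cases "ia = gs")
      case True
      then have "P!gs \<in> A_set V Kset eps s" unfolding A_eq using ia(2) by blast
      moreover have "P!gs \<in> set P" using inP[of gs] gs2 ix by simp
      ultimately have "P!gs \<in> (set P - Vr V E w Kset r) \<inter> A_set V Kset eps s" using gs1 by simp
      then show ?thesis by blast
    next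
      case F1: False
      show ?thesis
      proof (cases "ib = gt")
        case True
        then have "P!(n-gt) \<in> A_set V Kset eps t" unfolding A_eq using ib(2) by blast
        moreover have "P!(n-gt) \<in> set P" using inP[of "n-gt"] by simp
        ultimately have "P!(n-gt) \<in> (set P - Vr V E w Kset r) \<inter> A_set V Kset eps t" using gt1 by simp
        then show ?thesis by blast
      next
        case F2: False
        have "ia < gs" using F1 ia(1) by simp
        moreover have "ib < gt" using F2 ib(1) by simp
        moreover have "gt \<le> n" using gt2 by simp
        ultimately have "ia < n - ib" using gsgt by linarith
        then have "pos ia \<le> pos (n - ib)" using mono[of "ia" "n - ib"] by simp
        moreover have "real kk * c < pos ia" using ia(3) F1 kk0 by simp
        moreover have "pos (n - ib) < D - real kk * c" using ib(3) F2 kk0 by simp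
        ultimately have False using kkc by linarith
        then show ?thesis ..
      qed
    qed
  qed
  show ?thesis using part1 part2 part3 by blast
qed
end
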